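(* Let $V^{(t+1)}=V^{(t)}-\alpha_t\nabla L_t$ with $\alpha_t>0$. If $\alpha_tL_t\le\frac{1}{30p}$, then \[ L_{t+1}\le L_t-\frac{5\alpha_t\lVert\nabla L_t\rVert^2}{6}. \]
   Context: Standing assumption: $h=1/p$ with $p\ge1$. Huberized ReLU: $\phi(z)=0$ for $z<0$, $z^2/(2h)$ for $z\in[0,h]$, $z-h/2$ for $z>h$. Data $(x_1,y_1),\ldots,(x_n,y_n)$ with $x_s\in\mathbb{R}^{d+1}$, $\lVert x_s\rVert=1$, $y_s\in\{-1,1\}$. For $V\in\mathbb{R}^{2p\times(d+1)}$ with rows $v_1,\ldots,v_{2p}$ and fixed $u_1=\cdots=u_p=1$, $u_{p+1}=\cdots=u_{2p}=-1$: $f_V(x)=\sum_{i=1}^{2p}u_i\phi(v_i\cdot x)$, $L(V)=\frac1n\sum_s\ln(1+\exp(-y_sf_V(x_s)))$. $L_t=L(V^{(t)})$, $\nabla L_t=\nabla_VL|_{V=V^{(t)}}$, and $\lVert\cdot\rVert$ is the Frobenius norm. *)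

theory Defs
  imports "HOL-Analysis.Analysis"
begin

definition hrelu :: "real \<Rightarrow> real \<Rightarrow> real" where
  "hrelu h z = (if z < 0 then 0 else if z \<le> h then z^2 / (2*h) else z - h/2)"

text \<open>Weight matrices: rows indexed by ('k \<times> bool), where CARD('k) = p.
  Rows (i, True) carry output weight u = 1, rows (i, False) carry u = -1,
  so there are 2p rows, p with u = 1 and p with u = -1.  Each row lies in
  real^'d (= R^(d+1)).  The Euclidean norm on real^'d^('k\<times>bool) is the
  Frobenius norm, and the inner product is the Frobenius inner product.\<close>
definition uw :: "'k \<times> bool \<Rightarrow> real" where
  "uw i = (if snd i then 1 else -1)"

definition hh :: "'k::finite itself \<Rightarrow> real" where
  "hh _ = 1 / real CARD('k)"

definition fnet :: "real^'d^('k::finite \<times> bool) \<Rightarrow> real^'d \<Rightarrow> real" where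
  "fnet V x = (\<Sum>i\<in>UNIV. uw i * hrelu (hh TYPE('k)) ((V $ i) \<bullet> x))"

definition loss :: "nat \<Rightarrow> (nat \<Rightarrow> real^'d) \<Rightarrow> (nat \<Rightarrow> real)
                    \<Rightarrow> real^'d^('k::finite \<times> bool) \<Rightarrow> real" where
  "loss n x y V = (1 / real n) * (\<Sum>s<n. ln (1 + exp (- (y s) * fnet V (x s))))"

definition grad :: "('a::real_inner \<Rightarrow> real) \<Rightarrow> 'a \<Rightarrow> 'a" where
  "grad F V = (THE G. (F has_derivative (\<lambda>H. G \<bullet> H)) (at V))"

end

theory Submission
  imports Defs
begin

definition hder :: "real \<Rightarrow> real \<Rightarrow> real" where
  "hder h z = (if z < 0 then 0 else if z \<le> h then z / h else 1)"

lemma quad_aux: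
  fixes h E X a b :: real
  assumes h: "h > 0" and e: "E = X / (2*h)" and X: "\<bar>X\<bar> \<le> (b - a)^2"
  shows "\<bar>E\<bar> \<le> (b - a)^2 / (2*h)"
  using h X by (simp add: e abs_divide divide_right_mono)

lemma hrelu_quad:
  fixes h a b :: real
  assumes h: "h > 0"
  shows "\<bar>hrelu h b - hrelu h a - hder h a * (b - a)\<bar> \<le> (b - a)^2 / (2*h)"
proof -
  consider "a < 0" "b < 0" | "a < 0" "0 \<le> b" "b \<le> h" | "a < 0" "b > h"
    | "0 \<le> a" "a \<le> h" "b < 0" | "0 \<le> a" "a \<le> h" "0 \<le> b" "b \<le> h" | "0 \<le> a" "a \<le> h" "b > h"
    | "a > h" "b < 0" | "a > h" "0 \<le> b" "b \<le> h" | "a > h" "b > h" by linarith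
  then show ?thesis
  proof cases
    case 1 then show ?thesis using h by (simp add: hrelu_def hder_def)
  next
    case 2 
    have e: "hrelu h b - hrelu h a - hder h a * (b - a) = b^2/(2*h)" using 2 h by (simp add: hrelu_def hder_def)
    have "\<bar>b^2\<bar> \<le> (b - a)^2" using 2 by (simp add: power_mono)
    then show ?thesis using quad_aux[OF h e] by simp
  next
    case 3
    have e: "hrelu h b - hrelu h a - hder h a * (b - a) = (2*h*b - h^2)/(2*h)" using 3 h by (simp add: hrelu_def hder_def field_simps power2_eq_square)
    have "\<bar>2*h*b - h^2\<bar> \<le> (b - a)^2"
    proof -
      have "0 \<le> h*(2*b - h)" using 3 h by simp
      moreover have "b^2 \<le> (b-a)^2" using 3 h by (intro power_mono) auto
      moreover have "b^2 - (2*h*b - h^2) = (b-h)^2" by (simp add: power2_eq_square algebra_simps)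
      moreover have "h*(2*b - h) = 2*h*b - h^2" by (simp add: power2_eq_square algebra_simps)
      ultimately show ?thesis by (smt (verit) zero_le_power2)
    qed
    then show ?thesis using quad_aux[OF h e] by simp
  next
    case 4
    have e: "hrelu h b - hrelu h a - hder h a * (b - a) = (a*(a - 2*b))/(2*h)" using 4 h by (simp add: hrelu_def hder_def field_simps power2_eq_square)
    have "\<bar>a*(a - 2*b)\<bar> \<le> (b - a)^2"
    proof -
      have "0 \<le> a*(a - 2*b)" using 4 by simp
      moreover have "(b-a)^2 - a*(a - 2*b) = b^2" by (simp add: power2_eq_square algebra_simps)
      ultimately show ?thesis by (smt (verit) zero_le_power2)
    qed
    then show ?thesis using quad_aux[OF h e] by simp
  next
    case 5
    have e: "hrelu h b - hrelu h a - hder h a * (b - a) = (b-a)^2/(2*h)" using 5 h by (simp add: hrelu_def hder_def field_simps power2_eq_square)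
    then show ?thesis using quad_aux[OF h e] by simp
  next
    case 6
    have e: "hrelu h b - hrelu h a - hder h a * (b - a) = ((h-a)^2 + 2*(h-a)*(b-h))/(2*h)" using 6 h by (simp add: hrelu_def hder_def field_simps power2_eq_square)
    have "\<bar>(h-a)^2 + 2*(h-a)*(b-h)\<bar> \<le> (b - a)^2" using 6
    proof -
      have "0 \<le> (h-a)^2 + 2*(h-a)*(b-h)" using 6 by simp
      moreover have "(b - a)^2 = (h-a)^2 + 2*(h-a)*(b-h) + (b-h)^2" by (simp add: power2_eq_square algebra_simps)
      ultimately show ?thesis by simp
    qed
    then show ?thesis using quad_aux[OF h e] by simp
  next
    case 7
    have e: "hrelu h b - hrelu h a - hder h a * (b - a) = (h^2 - 2*h*b)/(2*h)" using 7 h by (simp add: hrelu_def hder_def field_simps power2_eq_square)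
    have "\<bar>h^2 - 2*h*b\<bar> \<le> (b - a)^2"
    proof -
      have "0 \<le> h^2 - 2*h*b" using 7 h by (simp add: power2_eq_square mult_nonneg_nonpos)
      moreover have "(h - b)^2 \<le> (a - b)^2" using 7 h by (intro power_mono) auto
      moreover have "(h - b)^2 = h^2 - 2*h*b + b^2" by (simp add: power2_eq_square algebra_simps)
      moreover have "(a-b)^2 = (b-a)^2" by (simp add: power2_commute)
      ultimately show ?thesis by (smt (verit) zero_le_power2)
    qed
    then show ?thesis using quad_aux[OF h e] by simp
  next
    case 8
    have e: "hrelu h b - hrelu h a - hder h a * (b - a) = (h-b)^2/(2*h)" using 8 h by (simp add: hrelu_def hder_def field_simps power2_eq_square)
    have "\<bar>(h-b)^2\<bar> \<le> (b - a)^2"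
    proof -
      have "(h - b)^2 \<le> (a - b)^2" using 8 h by (intro power_mono) auto
      moreover have "(a-b)^2 = (b-a)^2" by (simp add: power2_commute)
      ultimately show ?thesis by simp
    qed
    then show ?thesis using quad_aux[OF h e] by simp
  next
    case 9 then show ?thesis using h by (simp add: hrelu_def hder_def)
  qed
qed

lemma hrelu_mono_lip:
  fixes h u v :: real
  assumes h: "h > 0" and uv: "u \<le> v"
  shows "0 \<le> hrelu h v - hrelu h u \<and> hrelu h v - hrelu h u \<le> v - u"
proof -
  consider "u < 0" "v < 0" | "u < 0" "0 \<le> v" "v \<le> h" | "u < 0" "v > h"
    | "0 \<le> u" "u \<le> h" "0 \<le> v" "v \<le> h" | "0 \<le> u" "u \<le> h" "v > h"
    | "u > h" "v > h" using uv by linarith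
  then show ?thesis
  proof cases
    case 1 then show ?thesis using uv by (simp add: hrelu_def)
  next
    case 2
    have e: "hrelu h v - hrelu h u = v * v / (2*h)" using 2 h by (simp add: hrelu_def power2_eq_square)
    have "v * v \<le> h * v" using 2 by (simp add: mult_right_mono)
    moreover have "0 \<le> h * v" "h * u < 0" using 2 h by (simp_all add: mult_pos_neg)
    moreover have "(v-u)*(2*h) = 2*h * v - 2*h * u" by (simp add: algebra_simps)
    ultimately have "v * v \<le> (v-u)*(2*h)" by linarith
    then have "v * v / (2*h) \<le> v - u" using h by (simp add: pos_divide_le_eq)
    then show ?thesis using e 2 h by simp
  next
    case 3 then show ?thesis using h by (simp add: hrelu_def)
  next
    case 4
    have e: "hrelu h v - hrelu h u = (v - u) * (v + u) / (2*h)" using 4 h by (simp add: hrelu_def power2_eq_square field_simps)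
    have "(v - u) * (v + u) \<le> (v - u) * (2*h)" using 4 uv by (intro mult_left_mono) auto
    moreover have "0 \<le> (v - u) * (v + u)" using 4 uv by simp
    ultimately have "(v - u) * (v + u) / (2*h) \<le> v - u" "0 \<le> (v - u) * (v + u) / (2*h)"
      using h by (simp_all add: pos_divide_le_eq)
    then show ?thesis using e by simp
  next
    case 5
    have e: "hrelu h v - hrelu h u = (v - u) - (h - u)^2 / (2*h)" using 5 h by (simp add: hrelu_def power2_eq_square field_simps)
    have "(h - u)^2 \<le> (h - u) * (2*h)" using 5 by (simp add: power2_eq_square mult_left_mono)
    moreover have "(h - u) * (2*h) \<le> (v - u) * (2*h)" using 5 h by (intro mult_right_mono) auto
    ultimately have "(h - u)^2 \<le> (v - u) * (2*h)" by linarith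
    then have "(h - u)^2 / (2*h) \<le> (v - u)" using h by (simp add: pos_divide_le_eq)
    then show ?thesis using e h by simp
  next
    case 6 then show ?thesis using h uv by (simp add: hrelu_def)
  qed
qed

lemma hrelu_lip:
  fixes h a b :: real
  assumes h: "h > 0"
  shows "\<bar>hrelu h b - hrelu h a\<bar> \<le> \<bar>b - a\<bar>"
  using hrelu_mono_lip[OF h, of a b] hrelu_mono_lip[OF h, of b a] by (cases "a \<le> b") auto

lemma hder_bounds: "h > 0 \<Longrightarrow> 0 \<le> hder h z \<and> hder h z \<le> 1"
  by (auto simp: hder_def field_simps)

lemma aux_t: "(t::real) > 0 \<Longrightarrow> (t^2/(2*h))/t = t/(2*h)"
  by (simp add: power2_eq_square field_simps)

lemma hrelu_deriv:
  fixes h z :: real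
  assumes h: "h > 0"
  shows "(hrelu h has_real_derivative hder h z) (at z)"
proof -
  have "((\<lambda>w. (hrelu h w - hrelu h z) / (w - z) - hder h z) \<longlongrightarrow> 0) (at z)"
  proof (rule Lim_null_comparison)
    show "\<forall>\<^sub>F w in at z. norm ((hrelu h w - hrelu h z) / (w - z) - hder h z) \<le> \<bar>w - z\<bar> / (2*h)"
    proof (rule eventually_at_topological[THEN iffD2], intro exI[of _ UNIV] conjI ballI impI; simp?)
      fix w assume "w \<noteq> z"
      then have "(hrelu h w - hrelu h z) / (w - z) - hder h z = (hrelu h w - hrelu h z - hder h z * (w - z)) / (w - z)"
        by (simp add: field_simps)
      also have "\<bar>\<dots>\<bar> \<le> ((w - z)^2 / (2*h)) / \<bar>w - z\<bar>"
        unfolding abs_divide by (intro divide_right_mono hrelu_quad h) simp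
      also have "\<dots> = \<bar>w - z\<bar> / (2*h)" using \<open>w \<noteq> z\<close> aux_t[of "\<bar>w - z\<bar>" h] by simp
      finally show "\<bar>(hrelu h w - hrelu h z) / (w - z) - hder h z\<bar> \<le> \<bar>w - z\<bar> / (2 * h)" .
    qed
    have "((\<lambda>w. \<bar>w - z\<bar> / (2*h)) \<longlongrightarrow> \<bar>z - z\<bar> / (2*h)) (at z)"
      using h by (intro tendsto_intros) auto
    then show "((\<lambda>w. \<bar>w - z\<bar> / (2*h)) \<longlongrightarrow> 0) (at z)" using h by simp
  qed
  then have "((\<lambda>w. (hrelu h w - hrelu h z) / (w - z)) \<longlongrightarrow> hder h z) (at z)"
    by (simp add: LIM_zero_iff)
  then show ?thesis by (simp add: has_field_derivative_iff)
qed



lemma grad_works: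
  fixes F :: "'a::euclidean_space \<Rightarrow> real"
  assumes d: "(F has_derivative D) (at V)"
  shows "D = (\<lambda>H. grad F V \<bullet> H)"
proof -
  have lin: "linear D" using d by (rule has_derivative_linear)
  define G where "G = adjoint D 1"
  have DG: "D = (\<lambda>H. G \<bullet> H)"
  proof
    fix H show "D H = G \<bullet> H" using adjoint_works[OF lin, of H 1] by (simp add: G_def inner_commute)
  qed
  have "grad F V = G"
    unfolding grad_def
  proof (rule the_equality)
    show "(F has_derivative (\<lambda>H. G \<bullet> H)) (at V)" using d DG by simp
  next
    fix G' assume "(F has_derivative (\<lambda>H. G' \<bullet> H)) (at V)"
    then have e: "(\<lambda>H. G' \<bullet> H) = (\<lambda>H. G \<bullet> H)" using d DG has_derivative_unique by blast
    have "(G' - G) \<bullet> (G' - G) = 0"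
      using fun_cong[OF e, of "G' - G"] by (simp add: inner_diff_left inner_commute)
    then show "G' = G" by simp
  qed
  then show ?thesis using DG by simp
qed

lemma hh_pos: "hh TYPE('k::finite) > 0"
  by (simp add: hh_def)

lemma fnet_deriv:
  fixes xx :: "real^'d"
  shows "((\<lambda>V::real^'d^('k::finite \<times> bool). fnet V xx) has_derivative
     (\<lambda>H. \<Sum>i\<in>UNIV. uw i * (hder (hh TYPE('k)) (V $ i \<bullet> xx) * (H $ i \<bullet> xx)))) (at V)"
proof -
  have lin: "((\<lambda>V::real^'d^('k \<times> bool). V $ i \<bullet> xx) has_derivative (\<lambda>H. H $ i \<bullet> xx)) (at V)" for i
    by (rule bounded_linear_imp_has_derivative)
       (rule bounded_linear_compose[OF bounded_linear_inner_left bounded_linear_vec_nth])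
  have c: "((\<lambda>V::real^'d^('k \<times> bool). hrelu (hh TYPE('k)) (V $ i \<bullet> xx)) has_derivative
      (\<lambda>H. hder (hh TYPE('k)) (V $ i \<bullet> xx) * (H $ i \<bullet> xx))) (at V)" for i
    using has_derivative_compose[OF lin[of i] hrelu_deriv[OF hh_pos, unfolded has_field_derivative_def]]
    by simp
  show ?thesis unfolding fnet_def
    by (intro has_derivative_sum has_derivative_mult_right c)
qed

definition lg :: "real \<Rightarrow> real" where "lg t = ln (1 + exp (- t))"

lemma lg_deriv: "(lg has_real_derivative (- (1 / (1 + exp t)))) (at t)"
proof -
  have p: "0 < 1 + exp (- t)" by (simp add: add_pos_pos)
  have "((\<lambda>x. 1 + exp (- x)) has_real_derivative (exp (- t) * (- 1))) (at t)"
    by (auto intro!: derivative_eq_intros)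
  from DERIV_chain2[OF DERIV_ln[OF p] this]
  have "(lg has_real_derivative (inverse (1 + exp (- t)) * (exp (- t) * (- 1)))) (at t)"
    unfolding lg_def .
  moreover have "inverse (1 + exp (- t)) * (exp (- t) * (- 1)) = - (1 / (1 + exp t))"
    by (simp add: exp_minus field_simps)
  ultimately show ?thesis by simp
qed



lemma exp_quad:
  fixes u :: real assumes "\<bar>u\<bar> \<le> 1" shows "exp u \<le> 1 + u + u^2"
proof (cases "u \<ge> 0")
  case True then show ?thesis using exp_bound[of u] assms by simp
next
  case False
  define t where "t = - u"
  have t: "0 < t" "t \<le> 1" using False assms by (auto simp: t_def)
  have "1 + t \<le> exp t" by (rule exp_ge_add_one_self)
  then have "exp u \<le> 1 / (1 + t)" using t by (simp add: t_def exp_minus field_simps)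
  also have "1 / (1 + t) \<le> 1 - t + t^2"
  proof -
    have "(1 - t + t^2) * (1 + t) = 1 + t^3" by (simp add: power2_eq_square power3_eq_cube algebra_simps)
    moreover have "0 \<le> t^3" using t by simp
    ultimately have "1 \<le> (1 - t + t^2) * (1 + t)" by simp
    then show ?thesis using t by (simp add: divide_le_eq)
  qed
  finally show ?thesis by (simp add: t_def)
qed

lemma lg_q: "1 / (1 + exp z) \<le> lg z"
proof -
  have p: "0 < 1 + exp (- z)" by (simp add: add_pos_pos)
  have "ln (1 / (1 + exp (- z))) \<le> 1 / (1 + exp (- z)) - 1" by (rule ln_le_minus_one) (simp add: p)
  then have "- lg z \<le> 1 / (1 + exp (- z)) - 1" using p by (simp add: lg_def ln_div)
  moreover have "1 / (1 + exp (- z)) - 1 = - (1 / (1 + exp z))"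
  proof -
    have pz: "0 < 1 + exp z" by (simp add: add_pos_pos)
    then show ?thesis by (simp add: exp_minus field_simps)
  qed
  ultimately show ?thesis by simp
qed

lemma lg_step:
  assumes d: "\<bar>d\<bar> \<le> 1"
  shows "lg (z + d) - lg z \<le> (1 / (1 + exp z)) * (- d + d^2)"
proof -
  have p1: "0 < 1 + exp (- z)" and p2: "0 < 1 + exp (- z - d)" by (simp_all add: add_pos_pos)
  have qe: "exp (- z) / (1 + exp (- z)) = 1 / (1 + exp z)"
  proof -
    have pz: "0 < 1 + exp z" by (simp add: add_pos_pos)
    then show ?thesis by (simp add: exp_minus field_simps)
  qed
  have "lg (z + d) - lg z = ln ((1 + exp (- z - d)) / (1 + exp (- z)))"
    using p1 p2 by (simp add: lg_def ln_div)
  also have "\<dots> \<le> (1 + exp (- z - d)) / (1 + exp (- z)) - 1"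
    by (rule ln_le_minus_one) (simp add: p1 p2)
  also have "\<dots> = exp (- z) / (1 + exp (- z)) * (exp (- d) - 1)"
  proof -
    have e: "exp (- z - d) = exp (- z) * exp (- d)" by (simp add: exp_add[symmetric])
    show ?thesis using p1 unfolding e by (simp add: field_simps)
  qed
  also have "\<dots> = (1 / (1 + exp z)) * (exp (- d) - 1)" by (simp only: qe)
  also have "\<dots> \<le> (1 / (1 + exp z)) * (- d + d^2)"
  proof (rule mult_left_mono)
    show "exp (- d) - 1 \<le> - d + d^2" using exp_quad[of "- d"] d by simp
    show "0 \<le> 1 / (1 + exp z)" by (simp add: add_pos_pos less_imp_le)
  qed
  finally show ?thesis .
qed



definition dfn :: "real^'d^('k::finite \<times> bool) \<Rightarrow> real^'d \<Rightarrow> real^'d^('k \<times> bool) \<Rightarrow> real" where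
  "dfn V xx H = (\<Sum>i\<in>UNIV. uw i * (hder (hh TYPE('k)) (V $ i \<bullet> xx) * (H $ i \<bullet> xx)))"

lemma loss_eq: "loss n x y V = (1 / real n) * (\<Sum>s<n. lg (y s * fnet V (x s)))"
  by (simp add: loss_def lg_def)

lemma loss_deriv:
  fixes V :: "real^'d^('k::finite \<times> bool)"
  shows "(loss n x y has_derivative
    (\<lambda>H. (1 / real n) * (\<Sum>s<n. (- (1 / (1 + exp (y s * fnet V (x s))))) * (y s * dfn V (x s) H)))) (at V)"
proof -
  have e: "loss n x y = (\<lambda>V. (1 / real n) * (\<Sum>s<n. lg (y s * fnet V (x s))))"
    by (rule ext) (simp add: loss_eq)
  have c: "((\<lambda>V::real^'d^('k \<times> bool). lg (y s * fnet V (x s))) has_derivative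
     (\<lambda>H. (- (1 / (1 + exp (y s * fnet V (x s))))) * (y s * dfn V (x s) H))) (at V)" for s
  proof -
    have f: "((\<lambda>V::real^'d^('k \<times> bool). y s * fnet V (x s)) has_derivative (\<lambda>H. y s * dfn V (x s) H)) (at V)"
      unfolding dfn_def by (intro has_derivative_mult_right fnet_deriv)
    show ?thesis
      using has_derivative_compose[OF f lg_deriv[unfolded has_field_derivative_def]] by simp
  qed
  show ?thesis unfolding e
    by (intro has_derivative_mult_right has_derivative_sum c)
qed



lemma uw_abs: "\<bar>uw i\<bar> = 1" by (simp add: uw_def)

lemma card_rows: "card (UNIV :: ('k::finite \<times> bool) set) = 2 * CARD('k)"
  by (simp add: card_UNIV_bool)

lemma normsq_rows: fixes H :: "real^'d^'m::finite"
  shows "(norm H)^2 = (\<Sum>i\<in>UNIV. (norm (H $ i))^2)"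
  by (simp add: power2_norm_eq_inner inner_vec_def)

lemma S_sq: fixes H :: "real^'d^('k::finite \<times> bool)"
  shows "(\<Sum>i\<in>UNIV. norm (H $ i))^2 \<le> 2 * real CARD('k) * (norm H)^2"
  using sum_squared_le_sum_of_squares[of "\<lambda>i. norm (H $ i)" UNIV]
  by (simp add: normsq_rows card_rows mult.commute)

lemma row_inner: fixes xx :: "real^'d" assumes "norm xx = 1"
  shows "\<bar>v \<bullet> xx\<bar> \<le> norm v"
  using Cauchy_Schwarz_ineq2[of v xx] assms by simp

lemma dfn_bound: fixes xx :: "real^'d" and V H :: "real^'d^('k::finite \<times> bool)"
  assumes "norm xx = 1"
  shows "\<bar>dfn V xx H\<bar> \<le> (\<Sum>i\<in>UNIV. norm (H $ i))"
proof -
  have "\<bar>dfn V xx H\<bar> \<le> (\<Sum>i\<in>UNIV. \<bar>uw i * (hder (hh TYPE('k)) (V $ i \<bullet> xx) * (H $ i \<bullet> xx))\<bar>)"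
    unfolding dfn_def by (rule sum_abs)
  also have "\<dots> \<le> (\<Sum>i\<in>UNIV. norm (H $ i))"
  proof (rule sum_mono)
    fix i
    have "0 < hh TYPE('k)" by (rule hh_pos)
    from hder_bounds[OF this] have "\<bar>hder (hh TYPE('k)) (V $ i \<bullet> xx)\<bar> \<le> 1" by auto
    moreover have "\<bar>H $ i \<bullet> xx\<bar> \<le> norm (H $ i)" by (rule row_inner[OF assms])
    ultimately have "\<bar>hder (hh TYPE('k)) (V $ i \<bullet> xx)\<bar> * \<bar>H $ i \<bullet> xx\<bar> \<le> 1 * norm (H $ i)"
      by (intro mult_mono) auto
    then show "\<bar>uw i * (hder (hh TYPE('k)) (V $ i \<bullet> xx) * (H $ i \<bullet> xx))\<bar> \<le> norm (H $ i)"
      by (simp add: abs_mult uw_abs)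
  qed
  finally show ?thesis .
qed

lemma fnet_diff: fixes xx :: "real^'d" and V0 V1 :: "real^'d^('k::finite \<times> bool)"
  shows "fnet V1 xx - fnet V0 xx = (\<Sum>i\<in>UNIV. uw i * (hrelu (hh TYPE('k)) (V1 $ i \<bullet> xx) - hrelu (hh TYPE('k)) (V0 $ i \<bullet> xx)))"
  by (simp add: fnet_def sum_subtractf algebra_simps)

lemma fnet_diff_bound: fixes xx :: "real^'d" and V0 V1 :: "real^'d^('k::finite \<times> bool)"
  assumes "norm xx = 1"
  shows "\<bar>fnet V1 xx - fnet V0 xx\<bar> \<le> (\<Sum>i\<in>UNIV. norm ((V1 - V0) $ i))"
  unfolding fnet_diff
proof (rule order_trans[OF sum_abs], rule sum_mono)
  fix i
  have "\<bar>hrelu (hh TYPE('k)) (V1 $ i \<bullet> xx) - hrelu (hh TYPE('k)) (V0 $ i \<bullet> xx)\<bar> \<le> \<bar>V1 $ i \<bullet> xx - V0 $ i \<bullet> xx\<bar>"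
    by (rule hrelu_lip[OF hh_pos])
  also have "\<dots> = \<bar>(V1 - V0) $ i \<bullet> xx\<bar>" by (simp add: inner_diff_left)
  also have "\<dots> \<le> norm ((V1 - V0) $ i)" by (rule row_inner[OF assms])
  finally show "\<bar>uw i * (hrelu (hh TYPE('k)) (V1 $ i \<bullet> xx) - hrelu (hh TYPE('k)) (V0 $ i \<bullet> xx))\<bar> \<le> norm ((V1 - V0) $ i)"
    by (simp add: abs_mult uw_abs)
qed

lemma fnet_rem: fixes xx :: "real^'d" and V0 V1 :: "real^'d^('k::finite \<times> bool)"
  assumes "norm xx = 1"
  shows "\<bar>fnet V1 xx - fnet V0 xx - dfn V0 xx (V1 - V0)\<bar> \<le> real CARD('k) / 2 * (norm (V1 - V0))^2"
proof -
  define h where "h = hh TYPE('k)"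
  have h: "h > 0" by (simp add: h_def hh_pos)
  have h2: "1 / (2 * h) = real CARD('k) / 2" by (simp add: h_def hh_def)
  have "fnet V1 xx - fnet V0 xx - dfn V0 xx (V1 - V0) =
     (\<Sum>i\<in>UNIV. uw i * (hrelu h (V1 $ i \<bullet> xx) - hrelu h (V0 $ i \<bullet> xx) - hder h (V0 $ i \<bullet> xx) * (V1 $ i \<bullet> xx - V0 $ i \<bullet> xx)))"
    unfolding fnet_diff dfn_def h_def sum_subtractf[symmetric]
    by (intro sum.cong refl) (simp add: algebra_simps inner_diff_left)
  also have "\<bar>\<dots>\<bar> \<le> (\<Sum>i\<in>UNIV. (norm ((V1 - V0) $ i))^2 * (1 / (2 * h)))"
  proof (rule order_trans[OF sum_abs], rule sum_mono)
    fix i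
    have "\<bar>hrelu h (V1 $ i \<bullet> xx) - hrelu h (V0 $ i \<bullet> xx) - hder h (V0 $ i \<bullet> xx) * (V1 $ i \<bullet> xx - V0 $ i \<bullet> xx)\<bar>
        \<le> (V1 $ i \<bullet> xx - V0 $ i \<bullet> xx)^2 / (2 * h)" by (rule hrelu_quad[OF h])
    also have "(V1 $ i \<bullet> xx - V0 $ i \<bullet> xx)^2 = \<bar>(V1 - V0) $ i \<bullet> xx\<bar>^2" by (simp add: inner_diff_left)
    also have "\<dots> \<le> (norm ((V1 - V0) $ i))^2" by (intro power_mono row_inner[OF assms]) simp
    finally show "\<bar>uw i * (hrelu h (V1 $ i \<bullet> xx) - hrelu h (V0 $ i \<bullet> xx) - hder h (V0 $ i \<bullet> xx) * (V1 $ i \<bullet> xx - V0 $ i \<bullet> xx))\<bar>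
        \<le> (norm ((V1 - V0) $ i))^2 * (1 / (2 * h))"
      using h by (simp add: abs_mult uw_abs divide_right_mono)
  qed
  also have "\<dots> = (\<Sum>i\<in>UNIV. (norm ((V1 - V0) $ i))^2) * (1 / (2 * h))"
    by (rule sum_distrib_right[symmetric])
  also have "\<dots> = real CARD('k) / 2 * (norm (V1 - V0))^2"
    unfolding h2 normsq_rows[of "V1 - V0"] by simp
  finally show ?thesis .
qed



theorem lemma4:
  fixes n :: nat and x :: "nat \<Rightarrow> real^'d" and y :: "nat \<Rightarrow> real"
    and V0 V1 :: "real^'d^('k::finite \<times> bool)" and \<alpha> :: real
  assumes "\<And>s. s < n \<Longrightarrow> norm (x s) = 1"
    and "\<And>s. s < n \<Longrightarrow> y s \<in> {-1, 1}"
    and "\<alpha> > 0"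
    and "V1 = V0 - \<alpha> *\<^sub>R grad (loss n x y) V0"
    and "\<alpha> * loss n x y V0 \<le> 1 / (30 * real CARD('k))"
  shows "loss n x y V1 \<le> loss n x y V0 - 5 * \<alpha> * (norm (grad (loss n x y) V0))^2 / 6"
proof -
  note xn = assms(1) and yv = assms(2) and apos = assms(3) and V1def = assms(4) and step = assms(5)
  define P where "P = real CARD('k)"
  have P1: "P \<ge> 1" by (simp add: P_def)
  define L :: "real^'d^('k \<times> bool) \<Rightarrow> real" where "L = loss n x y"
  define G where "G = grad L V0"
  define N2 where "N2 = (norm G)^2"
  define z where "z s = y s * fnet V0 (x s)" for s
  define q where "q s = 1 / (1 + exp (z s))" for s
  define S where "S H = (\<Sum>i\<in>UNIV. norm (H $ i))" for H :: "real^'d^('k \<times> bool)"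
  define DL where "DL H = (1 / real n) * (\<Sum>s<n. (- q s) * (y s * dfn V0 (x s) H))" for H
  define L0 where "L0 = L V0"
  have Lder: "(L has_derivative DL) (at V0)"
    using loss_deriv[of n x y V0] unfolding L_def DL_def q_def z_def by simp
  have DLG: "DL H = G \<bullet> H" for H
    using grad_works[OF Lder] unfolding G_def by simp
  have y1: "\<bar>y s\<bar> = 1" if "s < n" for s using yv[OF that] by auto
  have qpos: "0 < q s" for s by (simp add: q_def add_pos_pos)
  have L0eq: "L0 = (1 / real n) * (\<Sum>s<n. lg (z s))"
    by (simp add: L0_def L_def loss_eq z_def)
  have sumq: "(1 / real n) * (\<Sum>s<n. q s) \<le> L0"
    unfolding L0eq by (intro mult_left_mono sum_mono) (auto simp: q_def lg_q)
  have S_nonneg: "0 \<le> S H" for H by (simp add: S_def sum_nonneg)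
  have Ssq: "(S H)^2 \<le> 2 * P * (norm H)^2" for H unfolding S_def P_def by (rule S_sq)
  have N2_nonneg: "0 \<le> N2" by (simp add: N2_def)
  have N2_DL: "N2 = DL G" by (simp add: DLG N2_def power2_norm_eq_inner)
  have N2_le: "N2 \<le> L0 * S G"
  proof -
    have "DL G \<le> (1 / real n) * (\<Sum>s<n. q s * S G)"
      unfolding DL_def
    proof (intro mult_left_mono sum_mono)
      fix s assume "s \<in> {..<n}"
      then have sn: "s < n" by simp
      have "- q s * (y s * dfn V0 (x s) G) \<le> q s * \<bar>y s * dfn V0 (x s) G\<bar>"
      proof -
        have "q s * (- (y s * dfn V0 (x s) G)) \<le> q s * \<bar>y s * dfn V0 (x s) G\<bar>"
          using qpos[of s] by (intro mult_left_mono) auto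
        then show ?thesis by simp
      qed
      also have "\<dots> \<le> q s * S G"
        using dfn_bound[OF xn[OF sn], of V0 G] y1[OF sn] qpos[of s]
        by (intro mult_left_mono) (auto simp: abs_mult S_def)
      finally show "- q s * (y s * dfn V0 (x s) G) \<le> q s * S G" .
    qed simp
    also have "\<dots> = ((1 / real n) * (\<Sum>s<n. q s)) * S G" by (simp add: sum_distrib_right)
    also have "\<dots> \<le> L0 * S G" by (rule mult_right_mono[OF sumq S_nonneg])
    finally show ?thesis using N2_DL by simp
  qed
  have L0_nonneg: "0 \<le> L0"
  proof -
    have "0 \<le> (1 / real n) * (\<Sum>s<n. q s)" using qpos by (intro mult_nonneg_nonneg sum_nonneg) (auto intro: less_imp_le)
    then show ?thesis using sumq by linarith
  qed
  have N2_bound: "N2 \<le> 2 * P * L0^2"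
  proof (cases "N2 = 0")
    case True then show ?thesis using P1 by simp
  next
    case False
    then have pos: "0 < N2" using N2_nonneg by simp
    have "N2^2 \<le> (L0 * S G)^2" using N2_le N2_nonneg by (intro power_mono) auto
    also have "\<dots> = L0^2 * (S G)^2" by (simp add: power_mult_distrib)
    also have "\<dots> \<le> L0^2 * (2 * P * N2)" using Ssq[of G] by (intro mult_left_mono) (auto simp: N2_def)
    finally have "N2 * N2 \<le> (2 * P * L0^2) * N2" by (simp add: power2_eq_square algebra_simps)
    then show ?thesis using pos by simp
  qed
  define \<delta> where "\<delta> = V1 - V0"
  have \<delta>G: "\<delta> = - (\<alpha> *\<^sub>R G)" by (simp add: \<delta>_def V1def G_def L_def)
  have S\<delta>: "S \<delta> = \<alpha> * S G"
    using apos by (simp add: S_def \<delta>G sum_distrib_left)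
  have norm\<delta>: "(norm \<delta>)^2 = \<alpha>^2 * N2"
    using apos by (simp add: \<delta>G N2_def power_mult_distrib)
  have G\<delta>: "G \<bullet> \<delta> = - \<alpha> * N2"
    by (simp add: \<delta>G N2_def power2_norm_eq_inner)
  have aPL: "\<alpha> * P * L0 \<le> 1 / 30"
  proof -
    have "\<alpha> * L0 \<le> 1 / (30 * P)" using step by (simp add: L0_def L_def P_def)
    then have "P * (\<alpha> * L0) \<le> P * (1 / (30 * P))" using P1 by (intro mult_left_mono) auto
    then show ?thesis using P1 by (simp add: algebra_simps)
  qed
  have aPL0: "0 \<le> \<alpha> * P * L0" using apos P1 L0_nonneg by simp
  define \<Delta> where "\<Delta> s = y s * fnet V1 (x s) - z s" for s
  have \<Delta>abs: "\<bar>\<Delta> s\<bar> \<le> S \<delta>" if sn: "s < n" for s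
  proof -
    have "\<Delta> s = y s * (fnet V1 (x s) - fnet V0 (x s))" by (simp add: \<Delta>_def z_def algebra_simps)
    then have "\<bar>\<Delta> s\<bar> = \<bar>fnet V1 (x s) - fnet V0 (x s)\<bar>" using y1[OF sn] by (simp add: abs_mult)
    also have "\<dots> \<le> S \<delta>" unfolding S_def \<delta>_def by (rule fnet_diff_bound[OF xn[OF sn]])
    finally show ?thesis .
  qed
  have \<Delta>sq: "(\<Delta> s)^2 \<le> \<alpha>^2 * (2 * P * N2)" if sn: "s < n" for s
  proof -
    have "(\<Delta> s)^2 = \<bar>\<Delta> s\<bar>^2" by simp
    also have "\<dots> \<le> (S \<delta>)^2" using \<Delta>abs[OF sn] by (intro power_mono) auto
    also have "\<dots> = \<alpha>^2 * (S G)^2" by (simp add: S\<delta> power_mult_distrib)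
    also have "\<dots> \<le> \<alpha>^2 * (2 * P * N2)" using Ssq[of G] by (intro mult_left_mono) (auto simp: N2_def)
    finally show ?thesis .
  qed
  have \<Delta>1: "\<bar>\<Delta> s\<bar> \<le> 1" if sn: "s < n" for s
  proof -
    have "(\<Delta> s)^2 \<le> \<alpha>^2 * (2 * P * (2 * P * L0^2))"
      using \<Delta>sq[OF sn] N2_bound P1 by (smt (verit) mult_left_mono zero_le_power2)
    also have "\<dots> = 4 * (\<alpha> * P * L0)^2" by (simp add: power2_eq_square algebra_simps)
    also have "\<dots> \<le> 4 * (1/30)^2" using aPL aPL0 by (intro mult_left_mono power_mono) auto
    also have "\<dots> \<le> 1^2" by (simp add: power2_eq_square)
    finally have "\<bar>\<Delta> s\<bar>^2 \<le> 1^2" by simp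
    then show ?thesis by (rule power2_le_imp_le) simp
  qed
  define R where "R s = \<Delta> s - y s * dfn V0 (x s) \<delta>" for s
  have Rb: "\<bar>R s\<bar> \<le> P / 2 * \<alpha>^2 * N2" if sn: "s < n" for s
  proof -
    have "R s = y s * (fnet V1 (x s) - fnet V0 (x s) - dfn V0 (x s) (V1 - V0))"
      by (simp add: R_def \<Delta>_def z_def \<delta>_def algebra_simps)
    then have "\<bar>R s\<bar> = \<bar>fnet V1 (x s) - fnet V0 (x s) - dfn V0 (x s) (V1 - V0)\<bar>"
      using y1[OF sn] by (simp add: abs_mult)
    also have "\<dots> \<le> P / 2 * (norm \<delta>)^2" unfolding P_def \<delta>_def by (rule fnet_rem[OF xn[OF sn]])
    finally show ?thesis by (simp add: norm\<delta>)
  qed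
  have per: "lg (y s * fnet V1 (x s)) - lg (z s) \<le> q s * (- \<Delta> s + (\<Delta> s)^2)" if sn: "s < n" for s
  proof -
    have "y s * fnet V1 (x s) = z s + \<Delta> s" by (simp add: \<Delta>_def)
    then show ?thesis using lg_step[OF \<Delta>1[OF sn], of "z s"] by (simp add: q_def)
  qed
  have L1eq: "L V1 = (1 / real n) * (\<Sum>s<n. lg (y s * fnet V1 (x s)))"
    by (simp add: L_def loss_eq)
  have "L V1 - L0 = (1 / real n) * (\<Sum>s<n. lg (y s * fnet V1 (x s)) - lg (z s))"
    by (simp add: L1eq L0eq sum_subtractf right_diff_distrib)
  also have "\<dots> \<le> (1 / real n) * (\<Sum>s<n. q s * (- \<Delta> s + (\<Delta> s)^2))"
    using per by (intro mult_left_mono sum_mono) auto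
  also have "\<dots> = DL \<delta> + (1 / real n) * (\<Sum>s<n. q s * (- R s + (\<Delta> s)^2))"
    by (simp add: DL_def R_def algebra_simps sum.distrib[symmetric] sum_distrib_left)
  also have "\<dots> \<le> DL \<delta> + (1 / real n) * (\<Sum>s<n. q s * (5 / 2 * P * \<alpha>^2 * N2))"
  proof -
    have t: "q s * (- R s + (\<Delta> s)^2) \<le> q s * (5 / 2 * P * \<alpha>^2 * N2)" if sn: "s < n" for s
    proof -
      have "- R s + (\<Delta> s)^2 \<le> P / 2 * \<alpha>^2 * N2 + \<alpha>^2 * (2 * P * N2)"
        using Rb[OF sn] \<Delta>sq[OF sn] by linarith
      also have "\<dots> = 5 / 2 * P * \<alpha>^2 * N2" by (simp add: algebra_simps)
      finally have "- R s + (\<Delta> s)^2 \<le> 5 / 2 * P * \<alpha>^2 * N2" .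
      then show ?thesis using qpos[of s] by (intro mult_left_mono) auto
    qed
    have "(1 / real n) * (\<Sum>s<n. q s * (- R s + (\<Delta> s)^2)) \<le> (1 / real n) * (\<Sum>s<n. q s * (5 / 2 * P * \<alpha>^2 * N2))"
      by (rule mult_left_mono, rule sum_mono, rule t, auto)
    then show ?thesis by simp
  qed
  also have "(1 / real n) * (\<Sum>s<n. q s * (5 / 2 * P * \<alpha>^2 * N2)) = ((1 / real n) * (\<Sum>s<n. q s)) * (5 / 2 * P * \<alpha>^2 * N2)"
    by (simp only: sum_distrib_right[symmetric] mult.assoc)
  also have "((1 / real n) * (\<Sum>s<n. q s)) * (5 / 2 * P * \<alpha>^2 * N2) \<le> L0 * (5 / 2 * P * \<alpha>^2 * N2)"
    using apos P1 N2_nonneg by (intro mult_right_mono[OF sumq]) auto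
  also have "L0 * (5 / 2 * P * \<alpha>^2 * N2) = 5 / 2 * (\<alpha> * P * L0) * (\<alpha> * N2)"
    by (simp add: power2_eq_square algebra_simps)
  also have "5 / 2 * (\<alpha> * P * L0) * (\<alpha> * N2) \<le> 5 / 2 * (1 / 30) * (\<alpha> * N2)"
    using aPL apos N2_nonneg by (intro mult_right_mono mult_left_mono) auto
  finally have "L V1 - L0 \<le> - \<alpha> * N2 + 5 / 2 * (1 / 30) * (\<alpha> * N2)"
    using DLG[of \<delta>] G\<delta> by simp
  moreover have "0 \<le> \<alpha> * N2" using apos N2_nonneg by simp
  ultimately have "L V1 \<le> L0 - 5 * \<alpha> * N2 / 6" by linarith
  then show ?thesis by (simp add: L_def L0_def N2_def G_def)
qed

end
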